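(* Every Lie bialgebra structure on $\mathfrak{W}\oplus\mathfrak{W}$ is coboundary: if $\delta:\mathfrak{W}\oplus\mathfrak{W}\to\bigwedge^2(\mathfrak{W}\oplus\mathfrak{W})$ is a linear map making $(\mathfrak{W}\oplus\mathfrak{W},\delta)$ a Lie bialgebra, then there exists $r\in\bigwedge^2(\mathfrak{W}\oplus\mathfrak{W})$ such that $\delta(x)=[x\otimes 1+1\otimes x,\,r]$ for all $x\in\mathfrak{W}\oplus\mathfrak{W}$.
   Context: The Witt algebra $\mathfrak{W}$ is the complex Lie algebra with basis $\{L_m: m\in\mathbb{Z}\}$ and bracket $[L_m,L_n]=(m-n)L_{m+n}$; $\mathfrak{W}\oplus\mathfrak{W}$ has basis $\{L_m,\bar L_m\}$ with the two copies commuting. A Lie bialgebra structure on a Lie algebra $\mathfrak{g}$ is a linear map (cobracket) $\delta:\mathfrak{g}\to\bigwedge^2\mathfrak{g}\subset\mathfrak{g}\otimes\mathfrak{g}$ satisfying the cocycle condition $\delta([x,y])=[x\otimes1+1\otimes x,\delta(y)]-[y\otimes1+1\otimes y,\delta(x)]$ and the co-Jacobi identity $\mathrm{Cycl}\big((\delta\otimes\mathrm{id})\delta(x)\big)=0$, where $\mathrm{Cycl}(a\otimes b\otimes c)=a\otimes b\otimes c+c\otimes a\otimes b+b\otimes c\otimes a$. *)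

theory Defs
  imports Complex_Main
begin

text \<open>Basis of W (+) W: index (False, m) is L_m, index (True, m) is the barred L_m.
  Elements of g = W (+) W are finitely supported coefficient functions idx => complex;
  g (x) g and g (x) g (x) g are finitely supported functions on idx^2, idx^3
  (coefficients w.r.t. the basis e_a (x) e_b, resp. e_a (x) e_b (x) e_c).
  The exterior square is the subspace of antisymmetric 2-tensors.\<close>

type_synonym idx = "bool \<times> int"
type_synonym vec = "idx \<Rightarrow> complex"
type_synonym ten2 = "idx \<times> idx \<Rightarrow> complex"
type_synonym ten3 = "idx \<times> idx \<times> idx \<Rightarrow> complex"

definition supp :: "('a \<Rightarrow> complex) \<Rightarrow> 'a set" where
  "supp f = {i. f i \<noteq> 0}"

definition fsupp :: "('a \<Rightarrow> complex) \<Rightarrow> bool" where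
  "fsupp f \<longleftrightarrow> finite (supp f)"

definition bvec :: "idx \<Rightarrow> vec" where
  "bvec a = (\<lambda>c. if c = a then 1 else 0)"

fun bbr :: "idx \<Rightarrow> idx \<Rightarrow> vec" where
  "bbr (s, m) (t, n) = (\<lambda>p. if s = t \<and> p = (s, m + n) then of_int (m - n) else 0)"

definition br :: "vec \<Rightarrow> vec \<Rightarrow> vec" where
  "br x y = (\<lambda>p. \<Sum>a\<in>supp x. \<Sum>b\<in>supp y. x a * y b * bbr a b p)"

text \<open>Action [x (x) 1 + 1 (x) x, t] of g on g (x) g.\<close>
definition ad2 :: "vec \<Rightarrow> ten2 \<Rightarrow> ten2" where
  "ad2 x t = (\<lambda>(p, q). \<Sum>(c, d)\<in>supp t.
      t (c, d) * (br x (bvec c) p * bvec d q + bvec c p * br x (bvec d) q))"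

definition antisym2 :: "ten2 \<Rightarrow> bool" where
  "antisym2 t \<longleftrightarrow> (\<forall>a b. t (a, b) = - t (b, a))"

definition delta_id :: "(vec \<Rightarrow> ten2) \<Rightarrow> ten2 \<Rightarrow> ten3" where
  "delta_id \<delta> t = (\<lambda>(p, q, r). \<Sum>(c, d)\<in>supp t. t (c, d) * \<delta> (bvec c) (p, q) * bvec d r)"

text \<open>Cycl(a (x) b (x) c) = a(x)b(x)c + c(x)a(x)b + b(x)c(x)a, in coefficients.\<close>
definition cycl :: "ten3 \<Rightarrow> ten3" where
  "cycl T = (\<lambda>(i, j, k). T (i, j, k) + T (j, k, i) + T (k, i, j))"

definition lie_bialgebra_WW :: "(vec \<Rightarrow> ten2) \<Rightarrow> bool" where
  "lie_bialgebra_WW \<delta> \<longleftrightarrow>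
     (\<forall>x. fsupp x \<longrightarrow> fsupp (\<delta> x) \<and> antisym2 (\<delta> x)) \<and>
     (\<forall>x y. fsupp x \<longrightarrow> fsupp y \<longrightarrow> \<delta> (\<lambda>i. x i + y i) = (\<lambda>k. \<delta> x k + \<delta> y k)) \<and>
     (\<forall>c x. fsupp x \<longrightarrow> \<delta> (\<lambda>i. c * x i) = (\<lambda>k. c * \<delta> x k)) \<and>
     (\<forall>x y. fsupp x \<longrightarrow> fsupp y \<longrightarrow>
        \<delta> (br x y) = (\<lambda>k. ad2 x (\<delta> y) k - ad2 y (\<delta> x) k)) \<and>
     (\<forall>x. fsupp x \<longrightarrow> cycl (delta_id \<delta> (\<delta> x)) = (\<lambda>_. 0))"

end

theory Submission
  imports Defs
begin

definition Yv :: "int \<Rightarrow> complex" where "Yv i = (if i = 2 then 1 else if i = -1 then -1 else 0)"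

lemma tail_zero:
  fixes f :: "int \<Rightarrow> complex"
  assumes fin: "finite {i. f i \<noteq> 0}" and step: "\<And>i. i \<ge> i0 \<Longrightarrow> f i \<noteq> 0 \<Longrightarrow> f (i+1) \<noteq> 0"
  shows "f i0 = 0"
proof (rule ccontr)
  assume h: "f i0 \<noteq> 0"
  have "\<forall>n::nat. f (i0 + int n) \<noteq> 0"
  proof
    fix n :: nat show "f (i0 + int n) \<noteq> 0"
    proof (induction n)
      case 0 then show ?case using h by simp
    next
      case (Suc n) then show ?case using step[of "i0 + int n"] by (simp add: algebra_simps)
    qed
  qed
  then have "range (\<lambda>n::nat. i0 + int n) \<subseteq> {i. f i \<noteq> 0}" by auto
  moreover have "infinite (range (\<lambda>n::nat. i0 + int n))"
  proof
    assume "finite (range (\<lambda>n::nat. i0 + int n))"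
    then have "finite (UNIV :: nat set)" using finite_imageD[of "\<lambda>n::nat. i0 + int n" UNIV] by (auto simp: inj_def)
    then show False by simp
  qed
  ultimately show False using fin finite_subset by blast
qed

lemma cmul0: "complex_of_int a * x = 0 \<Longrightarrow> a \<noteq> 0 \<Longrightarrow> x = 0" by simp
lemma cmulne: "complex_of_int a * x = complex_of_int b * y \<Longrightarrow> b \<noteq> 0 \<Longrightarrow> y \<noteq> 0 \<Longrightarrow> x \<noteq> 0" by auto

lemma up_zero:
  fixes f :: "int \<Rightarrow> complex"
  assumes "f i0 = 0" and "\<And>i. i \<ge> i0 \<Longrightarrow> f i = 0 \<Longrightarrow> f (i+1) = 0" and "i \<ge> i0"
  shows "f i = 0"
  using assms(3) by (induction i rule: int_ge_induct) (use assms in auto)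

lemma P1:
  fixes \<phi> :: "int \<Rightarrow> int \<Rightarrow> complex"
  assumes fin: "\<And>k. finite {i. \<phi> k i \<noteq> 0}"
  and anti: "\<And>k i. \<phi> k (k - i) = - \<phi> k i"
  and z0: "\<And>i. \<phi> 0 i = 0"
  and one: "\<And>i. \<phi> 1 i = C * Yv i"
  and rel: "\<And>m n i. of_int (m-n) * \<phi> (m+n) i = of_int (2*m-i) * \<phi> n (i-m) + of_int (m-n+i) * \<phi> n i
                  - of_int (2*n-i) * \<phi> m (i-n) - of_int (n-m+i) * \<phi> m i"
  shows "\<phi> k i = 0"
proof -
  define z where "z = \<phi> (-1)"
  define w where "w = \<phi> (-2)"
  define y where "y = \<phi> 2"
  have r1: "of_int (2-i) * z (i-1) + of_int (2+i) * z i = - of_int (2+i) * C * Yv (i+1) - of_int (2-i) * C * Yv i" for i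
    using rel[of 1 "-1" i] by (simp add: z0 one z_def algebra_simps)
  have z2: "z 2 = 0" using r1[of 2] by (simp add: Yv_def)
  have zstep: "z (i+1) = 0" if "i \<ge> 2" "z i = 0" for i
  proof (rule cmul0)
    show "complex_of_int (3+i) * z (i+1) = 0" using r1[of "i+1"] that by (simp add: Yv_def algebra_simps)
  qed (use that in simp)
  have zup: "z i = 0" if "i \<ge> 2" for i using up_zero[of z 2, OF z2 zstep that] .
  have r3: "3 * z i = of_int (2-i) * w (i-1) + of_int (3+i) * w i + of_int (4+i) * C * Yv (i+2) + of_int (3-i) * C * Yv i" for i
    using rel[of 1 "-2" i] by (simp add: z0 one z_def w_def algebra_simps)
  have w2: "5 * w 2 + C = 0" using r3[of 2] z2 by (simp add: Yv_def)
  have "w 2 = 0"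
  proof (rule tail_zero[where f = w])
    show "finite {i. w i \<noteq> 0}" using fin by (simp add: w_def)
    fix i :: int assume "i \<ge> 2" "w i \<noteq> 0"
    moreover have "complex_of_int (4+i) * w (i+1) = complex_of_int (i-1) * w i"
      using r3[of "i+1"] zup[of "i+1"] \<open>i \<ge> 2\<close> by (simp add: Yv_def algebra_simps)
    ultimately show "w (i+1) \<noteq> 0" using cmulne[of "4+i" "w (i+1)" "i-1" "w i"] by simp
  qed
  then have C0: "C = 0" using w2 by simp
  have r2: "-3 * C * Yv i = of_int (-2-i) * y (i+1) + of_int (i-3) * y i - of_int (4-i) * z (i-2) - of_int (3+i) * z i" for i
    using rel[of "-1" 2 i] by (simp add: one z_def y_def algebra_simps)
  have y4: "- (5 * y 4) = z 1" using r2[of 3] zup[of 3] by (simp add: Yv_def)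
  have "y 4 = 0"
  proof (rule tail_zero[where f = y])
    show "finite {i. y i \<noteq> 0}" using fin by (simp add: y_def)
    fix i :: int assume "i \<ge> 4" "y i \<noteq> 0"
    moreover have "complex_of_int (2+i) * y (i+1) = complex_of_int (i-3) * y i"
      using r2[of i] zup[of i] zup[of "i-2"] C0 \<open>i \<ge> 4\<close> by (simp add: Yv_def algebra_simps)
    ultimately show "y (i+1) \<noteq> 0" using cmulne[of "2+i" "y (i+1)" "i-3" "y i"] by simp
  qed
  then have z1: "z 1 = 0" using y4 by simp
  have z00: "z 0 = 0" using r1[of 1] z1 C0 by simp
  have za: "z (-1 - i) = - z i" for i using anti[of "-1" i] by (simp add: z_def)
  have zall: "z i = 0" for i
  proof -
    consider "i \<ge> 2" | "i = 1" | "i = 0" | "i = -1" | "i = -2" | "i \<le> -3" by linarith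
    then show ?thesis
    proof cases
      case 1 then show ?thesis by (rule zup)
    next
      case 2 then show ?thesis using z1 by simp
    next
      case 3 then show ?thesis using z00 by simp
    next
      case 4 then show ?thesis using za[of 0] z00 by simp
    next
      case 5 then show ?thesis using za[of 1] z1 by simp
    next
      case 6 then show ?thesis using za[of "-1-i"] zup[of "-1-i"] by simp
    qed
  qed
  have ystep: "y (i+1) = 0" if "i \<ge> 4" "y i = 0" for i
  proof (rule cmul0)
    show "complex_of_int (2+i) * y (i+1) = 0" using r2[of i] zall C0 that by (simp add: Yv_def algebra_simps)
  qed (use that in simp)
  have yup: "y i = 0" if "i \<ge> 4" for i using up_zero[of y 4, OF \<open>y 4 = 0\<close> ystep that] .
  have ya: "y (2 - i) = - y i" for i using anti[of 2 i] by (simp add: y_def)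
  have y1: "y 1 = 0" using ya[of 1] by simp
  have y0: "y 0 = 0" using r2[of 0] y1 zall C0 by simp
  have ym1: "y (-1) = 0" using r2[of "-1"] y0 zall C0 by simp
  have yall: "y i = 0" for i
  proof -
    consider "i \<ge> 4" | "i = 3" | "i = 2" | "i = 1" | "i = 0" | "i = -1" | "i \<le> -2" by linarith
    then show ?thesis
    proof cases
      case 1 then show ?thesis by (rule yup)
    next
      case 2 then show ?thesis using ya[of "-1"] ym1 by simp
    next
      case 3 then show ?thesis using ya[of 0] y0 by simp
    next
      case 4 then show ?thesis using y1 by simp
    next
      case 5 then show ?thesis using y0 by simp
    next
      case 6 then show ?thesis using ym1 by simp
    next
      case 7 then show ?thesis using ya[of "2-i"] yup[of "2-i"] by simp
    qed
  qed
  have wstep: "w (i+1) = 0" if "i \<ge> 2" "w i = 0" for i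
  proof (rule cmul0)
    show "complex_of_int (4+i) * w (i+1) = 0" using r3[of "i+1"] zall C0 that by (simp add: algebra_simps)
  qed (use that in simp)
  have wup: "w i = 0" if "i \<ge> 2" for i using up_zero[of w 2, OF \<open>w 2 = 0\<close> wstep that] .
  have wa: "w (-2 - i) = - w i" for i using anti[of "-2" i] by (simp add: w_def)
  have wm1: "w (-1) = 0" using wa[of "-1"] by simp
  have w0: "w 0 = 0" using r3[of 0] wm1 zall C0 by simp
  have w1: "w 1 = 0" using r3[of 1] w0 zall C0 by simp
  have wall: "w i = 0" for i
  proof -
    consider "i \<ge> 2" | "i = 1" | "i = 0" | "i = -1" | "i = -2" | "i = -3" | "i \<le> -4" by linarith
    then show ?thesis
    proof cases
      case 1 then show ?thesis by (rule wup)
    next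
      case 2 then show ?thesis using w1 by simp
    next
      case 3 then show ?thesis using w0 by simp
    next
      case 4 then show ?thesis using wm1 by simp
    next
      case 5 then show ?thesis using wa[of 0] w0 by simp
    next
      case 6 then show ?thesis using wa[of 1] w1 by simp
    next
      case 7 then show ?thesis using wa[of "-2-i"] wup[of "-2-i"] by simp
    qed
  qed
  have pos: "\<phi> k i = 0" if "k \<ge> 1" for k i
    using that
  proof (induction k arbitrary: i rule: int_ge_induct)
    case base then show ?case using one C0 by simp
  next
    case (step k)
    show ?case
    proof (cases "k = 1")
      case True then show ?thesis using yall by (simp add: y_def)
    next
      case False
      then have "k \<ge> 2" using step by simp
      then show ?thesis using rel[of 1 k i] step.IH one C0 by (simp add: add.commute)
    qed
  qed
  have neg: "\<phi> k i = 0" if "k \<le> -1" for k i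
  proof -
    have "\<phi> (-(int n) - 1) i = 0" for n i
    proof (induction n arbitrary: i)
      case 0 then show ?case using zall by (simp add: z_def)
    next
      case (Suc n)
      show ?case
      proof (cases "n = 0")
        case True then show ?thesis using wall by (simp add: w_def)
      next
        case False
        have e: "- int (Suc n) - 1 = (-1) + (- int n - 1)" by simp
        have "of_int (-1 - (- int n - 1)) * \<phi> (- int (Suc n) - 1) i = 0"
          using rel[of "-1" "- int n - 1" i] Suc.IH zall unfolding e by (simp add: z_def)
        moreover have "-1 - (- int n - 1) \<noteq> 0" using False by simp
        ultimately show ?thesis by simp
      qed
    qed
    from this[of "nat (-k-1)" i] that show ?thesis by simp
  qed
  show ?thesis
  proof (cases "k \<ge> 1")
    case True then show ?thesis by (rule pos)
  next
    case False
    then consider "k = 0" | "k \<le> -1" by linarith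
    then show ?thesis by cases (use z0 neg in auto)
  qed
qed

definition eop :: "(int \<Rightarrow> complex) \<Rightarrow> int \<Rightarrow> complex" where
  "eop \<rho> i = of_int (2-i) * \<rho> (i-1) + of_int (1+i) * \<rho> i"

lemma eop_anti: "(\<And>i. \<rho> (-i) = - \<rho> i) \<Longrightarrow> eop \<rho> (1-i) = - eop \<rho> i"
  unfolding eop_def
proof -
  assume a: "\<And>i. \<rho> (-i) = - \<rho> i"
  have "\<rho> (1 - i - 1) = - \<rho> i" using a[of i] by simp
  moreover have "\<rho> (1 - i) = - \<rho> (i - 1)" using a[of "i-1"] by simp
  ultimately show "of_int (2 - (1 - i)) * \<rho> (1 - i - 1) + of_int (1 + (1 - i)) * \<rho> (1 - i) =
      - (of_int (2 - i) * \<rho> (i - 1) + of_int (1 + i) * \<rho> i)" by (simp add: algebra_simps)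
qed

lemma eop_add: "eop (\<lambda>i. f i + g i) i = eop f i + eop g i"
  by (simp add: eop_def algebra_simps)

lemma NF_aux:
  "\<forall>\<phi>. (\<forall>i. \<phi> (1-i) = - \<phi> i) \<longrightarrow> (\<forall>i. i > int n + 2 \<longrightarrow> \<phi> i = 0) \<longrightarrow>
     (\<exists>\<rho> C. finite {i. \<rho> i \<noteq> 0} \<and> (\<forall>i. \<rho> (-i) = - \<rho> i) \<and> (\<forall>i. \<phi> i - eop \<rho> i = C * Yv i))"
proof (induction n)
  case 0
  show ?case
  proof (intro allI impI)
    fix \<phi> :: "int \<Rightarrow> complex"
    assume an: "\<forall>i. \<phi> (1-i) = - \<phi> i" and hi: "\<forall>i. i > int 0 + 2 \<longrightarrow> \<phi> i = 0"
    define \<rho> :: "int \<Rightarrow> complex" where "\<rho> i = (if i = 1 then \<phi> 1 / 2 else if i = -1 then - \<phi> 1 / 2 else 0)" for i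
    have "finite {i. \<rho> i \<noteq> 0}" by (rule finite_subset[of _ "{1,-1}"]) (auto simp: \<rho>_def)
    moreover have "\<forall>i. \<rho> (-i) = - \<rho> i" by (auto simp: \<rho>_def)
    moreover have "\<forall>i. \<phi> i - eop \<rho> i = \<phi> 2 * Yv i"
    proof
      fix i :: int
      consider "i > 2" | "i = 2" | "i = 1" | "i = 0" | "i = -1" | "i \<le> -2" by linarith
      then show "\<phi> i - eop \<rho> i = \<phi> 2 * Yv i"
      proof cases
        case 1 then show ?thesis using hi by (auto simp: eop_def \<rho>_def Yv_def)
      next
        case 2 then show ?thesis by (auto simp: eop_def \<rho>_def Yv_def)
      next
        case 3 then show ?thesis by (auto simp: eop_def \<rho>_def Yv_def)
      next
        case 4 then show ?thesis using an[rule_format, of 1] by (auto simp: eop_def \<rho>_def Yv_def)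
      next
        case 5 then show ?thesis using an[rule_format, of 2] by (auto simp: eop_def \<rho>_def Yv_def)
      next
        case 6
        have "\<phi> i = - \<phi> (1 - i)" using an[rule_format, of "1-i"] by simp
        also have "\<phi> (1-i) = 0" using hi 6 by auto
        finally show ?thesis using 6 by (auto simp: eop_def \<rho>_def Yv_def)
      qed
    qed
    ultimately show "\<exists>\<rho> C. finite {i. \<rho> i \<noteq> 0} \<and> (\<forall>i. \<rho> (-i) = - \<rho> i) \<and> (\<forall>i. \<phi> i - eop \<rho> i = C * Yv i)"
      by blast
  qed
next
  case (Suc n)
  show ?case
  proof (intro allI impI)
    fix \<phi> :: "int \<Rightarrow> complex"
    assume an: "\<forall>i. \<phi> (1-i) = - \<phi> i" and hi: "\<forall>i. i > int (Suc n) + 2 \<longrightarrow> \<phi> i = 0"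
    define N where "N = int n + 3"
    have N3: "N \<ge> 3" by (simp add: N_def)
    define b where "b = \<phi> N / of_int (2 - N)"
    define \<rho>0 :: "int \<Rightarrow> complex" where "\<rho>0 i = (if i = N - 1 then b else if i = 1 - N then - b else 0)" for i
    have r0a: "\<forall>i. \<rho>0 (-i) = - \<rho>0 i" using N3 by (auto simp: \<rho>0_def)
    have r0f: "finite {i. \<rho>0 i \<noteq> 0}" by (rule finite_subset[of _ "{N-1,1-N}"]) (auto simp: \<rho>0_def)
    define \<phi>' :: "int \<Rightarrow> complex" where "\<phi>' i = \<phi> i - eop \<rho>0 i" for i
    have an': "\<forall>i. \<phi>' (1-i) = - \<phi>' i"
      using an eop_anti[of \<rho>0] r0a by (simp add: \<phi>'_def)
    have hi': "\<forall>i. i > int n + 2 \<longrightarrow> \<phi>' i = 0"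
    proof (intro allI impI)
      fix i assume "i > int n + 2"
      then consider "i = N" | "i > N" unfolding N_def by linarith
      then show "\<phi>' i = 0"
      proof cases
        case 1
        have "of_int (2 - N) \<noteq> (0::complex)" using N3 by simp
        then show ?thesis using 1 N3 by (simp add: \<phi>'_def eop_def \<rho>0_def b_def)
      next
        case 2
        then show ?thesis using hi N3 by (simp add: \<phi>'_def eop_def \<rho>0_def N_def)
      qed
    qed
    obtain \<rho>1 C where r1: "finite {i. \<rho>1 i \<noteq> 0}" "\<forall>i. \<rho>1 (-i) = - \<rho>1 i" "\<forall>i. \<phi>' i - eop \<rho>1 i = C * Yv i"
      using Suc.IH an' hi' by blast
    define \<rho> :: "int \<Rightarrow> complex" where "\<rho> i = \<rho>0 i + \<rho>1 i" for i
    have "finite {i. \<rho> i \<noteq> 0}"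
      by (rule finite_subset[of _ "{i. \<rho>0 i \<noteq> 0} \<union> {i. \<rho>1 i \<noteq> 0}"]) (use r0f r1 in \<open>auto simp: \<rho>_def\<close>)
    moreover have "\<forall>i. \<rho> (-i) = - \<rho> i" using r0a r1 by (simp add: \<rho>_def)
    moreover have "\<forall>i. \<phi> i - eop \<rho> i = C * Yv i"
      using r1(3) unfolding \<rho>_def eop_add \<phi>'_def by (simp add: algebra_simps \<rho>_def[abs_def] eop_add)
    ultimately show "\<exists>\<rho> C. finite {i. \<rho> i \<noteq> 0} \<and> (\<forall>i. \<rho> (-i) = - \<rho> i) \<and> (\<forall>i. \<phi> i - eop \<rho> i = C * Yv i)"
      by blast
  qed
qed

lemma NF:
  fixes \<phi> :: "int \<Rightarrow> complex"
  assumes fin: "finite {i. \<phi> i \<noteq> 0}" and an: "\<And>i. \<phi> (1-i) = - \<phi> i"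
  shows "\<exists>\<rho> C. finite {i. \<rho> i \<noteq> 0} \<and> (\<forall>i. \<rho> (-i) = - \<rho> i) \<and> (\<forall>i. \<phi> i - eop \<rho> i = C * Yv i)"
proof -
  define B where "B = Max (insert 0 {i. \<phi> i \<noteq> 0})"
  have B: "\<And>i. i \<in> {i. \<phi> i \<noteq> 0} \<Longrightarrow> i \<le> B"
    unfolding B_def using fin by (intro Max_ge) auto
  define n where "n = nat (max B 2 - 2)"
  have "\<forall>i. i > int n + 2 \<longrightarrow> \<phi> i = 0"
    using B by (force simp: n_def)
  then show ?thesis using NF_aux[of n] an by blast
qed

definition act :: "idx \<Rightarrow> ten2 \<Rightarrow> ten2" where
 "act a t = (\<lambda>(p,q). (if fst p = fst a then of_int (2*snd a - snd p) * t ((fst a, snd p - snd a), q) else 0)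
   + (if fst q = fst a then of_int (2*snd a - snd q) * t (p, (fst a, snd q - snd a)) else 0))"

lemma act_app: "act (s,k) t ((s1,m1),(s2,m2)) =
   (if s1 = s then of_int (2*k - m1) * t ((s, m1 - k), (s2,m2)) else 0)
   + (if s2 = s then of_int (2*k - m2) * t ((s1,m1), (s, m2 - k)) else 0)"
  by (simp add: act_def)

lemma act_comm_same0:
  "act (s,m) (act (s,n) t) ((s1,m1),(s2,m2)) - act (s,n) (act (s,m) t) ((s1,m1),(s2,m2)) = of_int (m-n) * act (s,m+n) t ((s1,m1),(s2,m2))"
  by (cases "s1 = s"; cases "s2 = s"; simp add: act_app algebra_simps)

lemma act_comm_same:
  "act (s,m) (act (s,n) t) x - act (s,n) (act (s,m) t) x = of_int (m-n) * act (s,m+n) t x"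
  by (metis act_comm_same0 prod.collapse)

lemma act_comm_diff0:
  "s \<noteq> s' \<Longrightarrow> act (s,m) (act (s',n) t) ((s1,m1),(s2,m2)) = act (s',n) (act (s,m) t) ((s1,m1),(s2,m2))"
  by (cases "s1 = s"; cases "s2 = s"; cases "s1 = s'"; cases "s2 = s'"; simp add: act_app algebra_simps)

lemma act_comm_diff:
  "s \<noteq> s' \<Longrightarrow> act (s,m) (act (s',n) t) x = act (s',n) (act (s,m) t) x"
  by (metis act_comm_diff0 prod.collapse)

lemma act_sub: "act a (\<lambda>x. f x - g x) y = act a f y - act a g y"
  by (simp add: act_def split: prod.splits) (simp add: algebra_simps)

lemma act_add: "act a (\<lambda>x. f x + g x) y = act a f y + act a g y"
  by (simp add: act_def split: prod.splits) (simp add: algebra_simps)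

lemma act_zero: "act a (\<lambda>x. 0) y = 0"
  by (simp add: act_def split: prod.splits)

definition Wt :: "bool \<Rightarrow> idx \<times> idx \<Rightarrow> int" where
  "Wt s x = (if fst (fst x) = s then snd (fst x) else 0) + (if fst (snd x) = s then snd (snd x) else 0)"

lemma act0: "act (s,0) t x = - of_int (Wt s x) * t x"
  by (cases x) (auto simp: act_def Wt_def algebra_simps)

lemma Wt_swap: "Wt s (q,p) = Wt s (p,q)"
  by (simp add: Wt_def)

lemma act_anti0:
  assumes an: "antisym2 t"
  shows "act (s,k) t ((s1,m1),(s2,m2)) = - act (s,k) t ((s2,m2),(s1,m1))"
proof -
  have "t ((s, m1 - k), (s2,m2)) = - t ((s2,m2), (s, m1 - k))" "t ((s1,m1), (s, m2 - k)) = - t ((s, m2 - k), (s1,m1))"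
    using an unfolding antisym2_def by blast+
  then show ?thesis unfolding act_app by (cases "s1 = s"; cases "s2 = s"; simp add: algebra_simps)
qed

lemma act_anti: "antisym2 t \<Longrightarrow> antisym2 (act a t)"
proof -
  assume h: "antisym2 t"
  obtain s k where a: "a = (s,k)" by (cases a)
  show ?thesis unfolding antisym2_def
  proof (intro allI)
    fix p q :: idx
    obtain s1 m1 s2 m2 where "p = (s1,m1)" "q = (s2,m2)" by (cases p, cases q)
    then show "act a t (p, q) = - act a t (q, p)" using act_anti0[OF h, of s k s1 m1 s2 m2] a by simp
  qed
qed

lemma act_supp: "supp (act (s,k) t) \<subseteq> (\<lambda>(c,d). ((fst c, snd c + k), d)) ` supp t \<union> (\<lambda>(c,d). (c, (fst d, snd d + k))) ` supp t"
proof
  fix x assume x: "x \<in> supp (act (s,k) t)"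
  obtain s1 m1 s2 m2 where xx: "x = ((s1,m1),(s2,m2))" by (metis prod.collapse)
  have "act (s,k) t ((s1,m1),(s2,m2)) \<noteq> 0" using x xx by (simp add: supp_def)
  then have "(s1 = s \<and> t ((s, m1 - k), (s2,m2)) \<noteq> 0) \<or> (s2 = s \<and> t ((s1,m1), (s, m2 - k)) \<noteq> 0)"
    unfolding act_app by (auto split: if_splits)
  then show "x \<in> (\<lambda>(c,d). ((fst c, snd c + k), d)) ` supp t \<union> (\<lambda>(c,d). (c, (fst d, snd d + k))) ` supp t"
  proof
    assume h: "s1 = s \<and> t ((s, m1 - k), (s2,m2)) \<noteq> 0"
    then have "((s, m1 - k), (s2,m2)) \<in> supp t" by (simp add: supp_def)
    then show ?thesis using h xx by (auto intro!: image_eqI[where x = "((s, m1 - k), (s2,m2))"])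
  next
    assume h: "s2 = s \<and> t ((s1,m1), (s, m2 - k)) \<noteq> 0"
    then have "((s1,m1), (s, m2 - k)) \<in> supp t" by (simp add: supp_def)
    then show ?thesis using h xx by (auto intro!: image_eqI[where x = "((s1,m1), (s, m2 - k))"])
  qed
qed

lemma act_fsupp: "fsupp t \<Longrightarrow> fsupp (act a t)"
proof -
  assume "fsupp t"
  then have "finite (supp t)" by (simp add: fsupp_def)
  obtain s k where "a = (s,k)" by (cases a)
  then show ?thesis unfolding fsupp_def
    using act_supp[of s k t] \<open>finite (supp t)\<close> by (auto intro: finite_subset)
qed

definition derivfam :: "(idx \<Rightarrow> ten2) \<Rightarrow> bool" where
 "derivfam D \<longleftrightarrow> (\<forall>a. fsupp (D a) \<and> antisym2 (D a)) \<and>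
   (\<forall>s m n x. of_int (m-n) * D (s,m+n) x = act (s,m) (D (s,n)) x - act (s,n) (D (s,m)) x) \<and>
   (\<forall>s s' m n x. s \<noteq> s' \<longrightarrow> act (s,m) (D (s',n)) x = act (s',n) (D (s,m)) x)"

lemma fsupp_sub: "fsupp f \<Longrightarrow> fsupp g \<Longrightarrow> fsupp (\<lambda>x. f x - g x)"
  unfolding fsupp_def supp_def by (rule finite_subset[of _ "{i. f i \<noteq> 0} \<union> {i. g i \<noteq> 0}"]) auto

lemma fsupp_add: "fsupp f \<Longrightarrow> fsupp g \<Longrightarrow> fsupp (\<lambda>x. f x + g x)"
  unfolding fsupp_def supp_def by (rule finite_subset[of _ "{i. f i \<noteq> 0} \<union> {i. g i \<noteq> 0}"]) auto

lemma antisym_sub: "antisym2 f \<Longrightarrow> antisym2 g \<Longrightarrow> antisym2 (\<lambda>x. f x - g x)"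
  unfolding antisym2_def by (metis minus_diff_eq minus_diff_minus)

lemma antisym_add: "antisym2 f \<Longrightarrow> antisym2 g \<Longrightarrow> antisym2 (\<lambda>x. f x + g x)"
  unfolding antisym2_def by (metis minus_add_distrib)

lemma derivfam_sub:
  assumes D: "derivfam D" and r: "fsupp r" "antisym2 r"
  shows "derivfam (\<lambda>a x. D a x - act a r x)"
proof -
  have 1: "\<forall>a. fsupp (\<lambda>x. D a x - act a r x) \<and> antisym2 (\<lambda>x. D a x - act a r x)"
  proof
    fix a
    have "fsupp (D a)" "antisym2 (D a)" using D unfolding derivfam_def by blast+
    moreover have "fsupp (act a r)" "antisym2 (act a r)" using r act_fsupp act_anti by auto
    ultimately show "fsupp (\<lambda>x. D a x - act a r x) \<and> antisym2 (\<lambda>x. D a x - act a r x)"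
      using fsupp_sub antisym_sub by blast
  qed
  have 2: "of_int (m-n) * (D (s,m+n) x - act (s,m+n) r x) =
      act (s,m) (\<lambda>x. D (s,n) x - act (s,n) r x) x - act (s,n) (\<lambda>x. D (s,m) x - act (s,m) r x) x" for s m n x
  proof -
    have "of_int (m-n) * D (s,m+n) x = act (s,m) (D (s,n)) x - act (s,n) (D (s,m)) x"
      using D unfolding derivfam_def by blast
    moreover have "act (s,m) (act (s,n) r) x - act (s,n) (act (s,m) r) x = of_int (m-n) * act (s,m+n) r x"
      by (rule act_comm_same)
    ultimately show ?thesis by (simp add: act_sub algebra_simps)
  qed
  have 3: "act (s,m) (\<lambda>x. D (s',n) x - act (s',n) r x) x = act (s',n) (\<lambda>x. D (s,m) x - act (s,m) r x) x"
    if "s \<noteq> s'" for s s' m n x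
  proof -
    have "act (s,m) (D (s',n)) x = act (s',n) (D (s,m)) x" using D that unfolding derivfam_def by blast
    moreover have "act (s,m) (act (s',n) r) x = act (s',n) (act (s,m) r) x" using that by (rule act_comm_diff)
    ultimately show ?thesis by (simp add: act_sub)
  qed
  show ?thesis unfolding derivfam_def using 1 2 3 by blast
qed

lemma dfD: "derivfam D \<Longrightarrow> fsupp (D a)" "derivfam D \<Longrightarrow> antisym2 (D a)"
  unfolding derivfam_def by blast+

lemma dfRel: "derivfam D \<Longrightarrow> of_int (m-n) * D (s,m+n) x = act (s,m) (D (s,n)) x - act (s,n) (D (s,m)) x"
  unfolding derivfam_def by blast

lemma dfCross: "derivfam D \<Longrightarrow> s \<noteq> s' \<Longrightarrow> act (s,m) (D (s',n)) x = act (s',n) (D (s,m)) x"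
  unfolding derivfam_def by blast

lemma anti_inst: "antisym2 t \<Longrightarrow> t (p,q) = - t (q,p)"
  unfolding antisym2_def by blast

lemma large_k:
  assumes E: "derivfam E" and W: "Wt s x = 0"
  shows "E (s,0) x = 0"
proof -
  obtain \<sigma> m s2 m2 where x: "x = ((\<sigma>,m),(s2,m2))" by (metis prod.collapse)
  define u where "u = E (s,0)"
  have key: "act (\<sigma>,k) u ((\<sigma>,m+k),(s2,m2)) = 0" for k
  proof (cases "\<sigma> = s")
    case True
    have rel: "of_int (k-0) * E (s,k+0) ((\<sigma>,m+k),(s2,m2)) = act (s,k) (E (s,0)) ((\<sigma>,m+k),(s2,m2)) - act (s,0) (E (s,k)) ((\<sigma>,m+k),(s2,m2))"
      by (rule dfRel[OF E])
    have "Wt s ((\<sigma>,m+k),(s2,m2)) = k" using W True by (auto simp: x Wt_def split: if_splits)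
    then show ?thesis using rel True unfolding u_def act0 by simp
  next
    case False
    have "act (\<sigma>,k) (E (s,0)) ((\<sigma>,m+k),(s2,m2)) = act (s,0) (E (\<sigma>,k)) ((\<sigma>,m+k),(s2,m2))"
      using dfCross[OF E False] .
    moreover have "Wt s ((\<sigma>,m+k),(s2,m2)) = 0" using W False by (auto simp: x Wt_def split: if_splits)
    ultimately show ?thesis unfolding u_def act0 by simp
  qed
  have fin: "finite (supp u)" using dfD(1)[OF E] by (simp add: u_def fsupp_def)
  define B where "B = Max (insert 0 ((\<lambda>y. snd (fst y)) ` supp u))"
  have B: "snd (fst y) \<le> B" if "y \<in> supp u" for y
    unfolding B_def using fin that by (intro Max_ge) auto
  define k where "k = \<bar>B\<bar> + \<bar>m\<bar> + 1"
  have big: "u ((\<sigma>,m+k),y) = 0" for y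
  proof (rule ccontr)
    assume "u ((\<sigma>,m+k),y) \<noteq> 0"
    then have "((\<sigma>,m+k),y) \<in> supp u" by (simp add: supp_def)
    from B[OF this] show False unfolding k_def by simp
  qed
  have "act (\<sigma>,k) u ((\<sigma>,m+k),(s2,m2)) = of_int (k - m) * u ((\<sigma>,m),(s2,m2))"
    unfolding act_app using big by simp
  with key have "of_int (k - m) * u ((\<sigma>,m),(s2,m2)) = 0" by simp
  moreover have "k - m \<noteq> 0" unfolding k_def by simp
  ultimately show ?thesis unfolding x u_def by simp
qed

lemma stepA:
  assumes D: "derivfam D"
  shows "\<exists>r. fsupp r \<and> antisym2 r \<and> (\<forall>s x. D (s,0) x = act (s,0) r x)"
proof -
  define r :: ten2 where "r x = (if Wt False x \<noteq> 0 then - D (False,0) x / of_int (Wt False x)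
      else if Wt True x \<noteq> 0 then - D (True,0) x / of_int (Wt True x) else 0)" for x
  have cross: "of_int (Wt False x) * D (True,0) x = of_int (Wt True x) * D (False,0) x" for x
    using dfCross[OF D, of False True 0 0 x] unfolding act0 by simp
  have eq: "D (s,0) x = act (s,0) r x" for s x
  proof (cases "Wt s x = 0")
    case True
    then show ?thesis using large_k[OF D True] unfolding act0 by simp
  next
    case False
    show ?thesis
    proof (cases s)
      case True
      show ?thesis
      proof (cases "Wt False x = 0")
        case True
        then show ?thesis using \<open>Wt s x \<noteq> 0\<close> \<open>s\<close> unfolding act0 r_def by simp
      next
        case False
        have "D (True,0) x = of_int (Wt True x) * D (False,0) x / of_int (Wt False x)"
          using cross[of x] False by (simp add: field_simps)
        then show ?thesis using False \<open>s\<close> unfolding act0 r_def by simp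
      qed
    next
      case False
      then show ?thesis using \<open>Wt s x \<noteq> 0\<close> unfolding act0 r_def by simp
    qed
  qed
  have "supp r \<subseteq> supp (D (False,0)) \<union> supp (D (True,0))"
    unfolding supp_def r_def by auto
  moreover have "fsupp (D (False,0))" "fsupp (D (True,0))" using D by (rule dfD(1))+
  ultimately have "fsupp r"
    unfolding fsupp_def by (meson finite_Un finite_subset)
  moreover have "antisym2 r" unfolding antisym2_def
  proof (intro allI)
    fix p q :: idx
    have a: "antisym2 (D (False,0))" "antisym2 (D (True,0))" using D by (rule dfD(2))+
    show "r (p,q) = - r (q,p)"
      using anti_inst[OF a(1), of p q] anti_inst[OF a(2), of p q]
      unfolding r_def Wt_swap[of _ q p] by simp
  qed
  ultimately show ?thesis using eq by blast
qed

definition normd :: "(idx \<Rightarrow> ten2) \<Rightarrow> bool" where "normd E \<longleftrightarrow> (\<forall>s x. E (s,0) x = 0)"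
definition wz :: "ten2 \<Rightarrow> bool" where "wz r \<longleftrightarrow> (\<forall>s x. r x \<noteq> 0 \<longrightarrow> Wt s x = 0)"

lemma wz_act0: "wz r \<Longrightarrow> act (s,0) r x = 0"
proof (cases "r x = 0")
  case False
  assume "wz r"
  then have "Wt s x = 0" using False unfolding wz_def by blast
  then show ?thesis unfolding act0 by simp
qed (simp add: act0)

lemma normd_sub: "normd E \<Longrightarrow> wz r \<Longrightarrow> normd (\<lambda>a x. E a x - act a r x)"
  unfolding normd_def using wz_act0 by simp

lemma weights:
  assumes E: "derivfam E" and N: "normd E" and nz: "E (s,k) x \<noteq> 0"
  shows "Wt s x = k" "Wt (\<not>s) x = 0"
proof -
  have z: "E (s',0) = (\<lambda>_. 0)" for s' using N unfolding normd_def by auto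
  have "of_int (0-k) * E (s,0+k) x = act (s,0) (E (s,k)) x - act (s,k) (E (s,0)) x"
    by (rule dfRel[OF E])
  then have "of_int (Wt s x - k) * E (s,k) x = 0" unfolding act0 z act_zero by (auto simp: algebra_simps)
  then have "of_int (Wt s x - k) = (0::complex)" using nz by simp
  then show "Wt s x = k" by simp
  have "act (\<not>s,0) (E (s,k)) x = act (s,k) (E (\<not>s,0)) x" using dfCross[OF E, of "\<not>s" s] by simp
  then have "of_int (Wt (\<not>s) x) * E (s,k) x = 0" unfolding act0 z act_zero by simp
  then have "of_int (Wt (\<not>s) x) = (0::complex)" using nz by simp
  then show "Wt (\<not>s) x = 0" by simp
qed

lemma stepB:
  assumes E: "derivfam E"
  shows "\<exists>r. fsupp r \<and> antisym2 r \<and> wz r \<and> E (False,1) ((False,1),(True,0)) = act (False,1) r ((False,1),(True,0))"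
proof -
  define c where "c = E (False,1) ((False,1),(True,0))"
  define r :: ten2 where "r x = (if x = ((False,0),(True,0)) then c else if x = ((True,0),(False,0)) then - c else 0)" for x
  have "fsupp r" unfolding fsupp_def supp_def
    by (rule finite_subset[of _ "{((False,0),(True,0)), ((True,0),(False,0))}"]) (auto simp: r_def)
  moreover have "antisym2 r" unfolding antisym2_def r_def by auto
  moreover have "wz r" unfolding wz_def r_def Wt_def by auto
  moreover have "E (False,1) ((False,1),(True,0)) = act (False,1) r ((False,1),(True,0))"
    unfolding act_app r_def c_def by simp
  ultimately show ?thesis by blast
qed

lemma crossz:
  assumes E: "derivfam E" and z: "E (False,1) ((False,1),(True,0)) = 0"
  shows "E (True,k) ((False,0),(True,k)) = 0" "E (False,k) ((False,k),(True,0)) = 0"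
proof -
  have t: "E (True,k') ((False,0),(True,k')) = 0" for k'
  proof -
    have "act (False,1) (E (True,k')) ((False,1),(True,k')) = act (True,k') (E (False,1)) ((False,1),(True,k'))"
      using dfCross[OF E, of False True] by simp
    then show ?thesis unfolding act_app using z by simp
  qed
  then show "E (True,k) ((False,0),(True,k)) = 0" .
  have "act (False,k) (E (True,1)) ((False,k),(True,1)) = act (True,1) (E (False,k)) ((False,k),(True,1))"
    using dfCross[OF E, of False True] by simp
  then show "E (False,k) ((False,k),(True,0)) = 0" unfolding act_app using t[of 1] by simp
qed

lemma fin_block: "fsupp t \<Longrightarrow> finite {i. t ((s,i),(s,k-i)) \<noteq> 0}"
proof -
  assume "fsupp t"
  then have "finite ((\<lambda>y. snd (fst y)) ` supp t)" unfolding fsupp_def by simp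
  moreover have "{i. t ((s,i),(s,k-i)) \<noteq> 0} \<subseteq> (\<lambda>y. snd (fst y)) ` supp t"
  proof
    fix i assume "i \<in> {i. t ((s,i),(s,k-i)) \<noteq> 0}"
    then have "((s,i),(s,k-i)) \<in> supp t" by (simp add: supp_def)
    then show "i \<in> (\<lambda>y. snd (fst y)) ` supp t" by (auto intro: image_eqI[where x = "((s,i),(s,k-i))"])
  qed
  ultimately show ?thesis by (rule finite_subset[rotated])
qed

lemma stepC:
  assumes E: "derivfam E"
  shows "\<exists>r C. fsupp r \<and> antisym2 r \<and> wz r \<and> (\<forall>x. r x \<noteq> 0 \<longrightarrow> fst (fst x) = fst (snd x)) \<and>
     (\<forall>s i. E (s,1) ((s,i),(s,1-i)) - act (s,1) r ((s,i),(s,1-i)) = C s * Yv i)"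
proof -
  have nf: "\<exists>\<rho> c. finite {i. \<rho> i \<noteq> 0} \<and> (\<forall>i. \<rho> (-i) = - \<rho> i) \<and>
      (\<forall>i. E (s,1) ((s,i),(s,1-i)) - eop \<rho> i = c * Yv i)" for s
  proof (rule NF)
    show "finite {i. E (s,1) ((s,i),(s,1-i)) \<noteq> 0}" using fin_block[OF dfD(1)[OF E]] .
    fix i
    show "E (s,1) ((s,1-i),(s,1-(1-i))) = - E (s,1) ((s,i),(s,1-i))"
      using anti_inst[OF dfD(2)[OF E], of "(s,1)" "(s,1-i)" "(s,i)"] by simp
  qed
  obtain \<rho>F cF where F: "finite {i. \<rho>F i \<noteq> 0}" "\<forall>i. \<rho>F (-i) = - \<rho>F i"
      "\<forall>i. E (False,1) ((False,i),(False,1-i)) - eop \<rho>F i = cF * Yv i" using nf[of False] by blast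
  obtain \<rho>T cT where T: "finite {i. \<rho>T i \<noteq> 0}" "\<forall>i. \<rho>T (-i) = - \<rho>T i"
      "\<forall>i. E (True,1) ((True,i),(True,1-i)) - eop \<rho>T i = cT * Yv i" using nf[of True] by blast
  define \<rho> where "\<rho> s = (if s then \<rho>T else \<rho>F)" for s
  define C where "C s = (if s then cT else cF)" for s
  have \<rho>fin: "finite {i. \<rho> s i \<noteq> 0}" for s using F T by (simp add: \<rho>_def)
  have \<rho>odd: "\<rho> s (-i) = - \<rho> s i" for s i using F T by (simp add: \<rho>_def)
  have \<rho>eq: "E (s,1) ((s,i),(s,1-i)) - eop (\<rho> s) i = C s * Yv i" for s i
    using F T by (cases s) (simp_all add: \<rho>_def C_def)
  define r :: ten2 where "r x = (if fst (fst x) = fst (snd x) \<and> snd (snd x) = - snd (fst x) then \<rho> (fst (fst x)) (snd (fst x)) else 0)" for x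
  have "supp r \<subseteq> (\<lambda>(s,i). ((s,i),(s,-i))) ` (UNIV \<times> {i. \<rho> False i \<noteq> 0} \<union> UNIV \<times> {i. \<rho> True i \<noteq> 0})"
  proof
    fix x assume "x \<in> supp r"
    then have h: "fst (fst x) = fst (snd x)" "snd (snd x) = - snd (fst x)" "\<rho> (fst (fst x)) (snd (fst x)) \<noteq> 0"
      by (auto simp: supp_def r_def split: if_splits)
    define s where "s = fst (fst x)"
    define i where "i = snd (fst x)"
    have x1: "x = ((s,i),(s,-i))" unfolding s_def i_def using h(1,2)
      by (cases x) (auto simp: prod_eq_iff)
    have x2: "\<rho> s i \<noteq> 0" using h(3) by (simp add: s_def i_def)
    note x = x1 x2
    then have "(s,i) \<in> UNIV \<times> {i. \<rho> False i \<noteq> 0} \<union> UNIV \<times> {i. \<rho> True i \<noteq> 0}" by (cases s) auto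
    then show "x \<in> (\<lambda>(s,i). ((s,i),(s,-i))) ` (UNIV \<times> {i. \<rho> False i \<noteq> 0} \<union> UNIV \<times> {i. \<rho> True i \<noteq> 0})"
      using x by (auto intro: image_eqI[where x = "(s,i)"])
  qed
  moreover have "finite (UNIV \<times> {i. \<rho> False i \<noteq> 0} \<union> UNIV \<times> {i. \<rho> True i \<noteq> 0} :: (bool \<times> int) set)"
    using \<rho>fin by simp
  ultimately have "fsupp r" unfolding fsupp_def by (meson finite_imageI finite_subset)
  moreover have "antisym2 r" unfolding antisym2_def
  proof (intro allI)
    fix p q :: idx
    show "r (p,q) = - r (q,p)"
      using \<rho>odd[of "fst p" "snd p"] \<rho>odd[of "fst p" "snd q"] by (auto simp: r_def)
  qed
  moreover have "wz r" unfolding wz_def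
  proof (intro allI impI)
    fix s x assume "r x \<noteq> 0"
    then show "Wt s x = 0" unfolding r_def Wt_def by (auto split: if_splits)
  qed
  moreover have "\<forall>x. r x \<noteq> 0 \<longrightarrow> fst (fst x) = fst (snd x)" unfolding r_def by auto
  moreover have "act (s,1) r ((s,i),(s,1-i)) = eop (\<rho> s) i" for s i
    unfolding act_app eop_def r_def by simp
  ultimately show ?thesis using \<rho>eq by metis
qed

lemma act_cross:
  assumes "\<forall>x. r x \<noteq> 0 \<longrightarrow> fst (fst x) = fst (snd x)" and "s1 \<noteq> s2"
  shows "act a r ((s1,m1),(s2,m2)) = 0"
proof -
  obtain s k where a: "a = (s,k)" by (cases a)
  have r1: "r ((s, m1 - k), (s2,m2)) = 0" if "s1 = s" using assms that by force
  have r2: "r ((s1,m1), (s, m2 - k)) = 0" if "s2 = s" using assms that by force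
  show ?thesis unfolding a act_app using r1 r2 by auto
qed

lemma ezero:
  assumes E: "derivfam E" and N: "normd E"
    and c1: "\<And>k. E (False,k) ((False,k),(True,0)) = 0" and c2: "\<And>k. E (True,k) ((False,0),(True,k)) = 0"
    and one: "\<And>s i. E (s,1) ((s,i),(s,1-i)) = C s * Yv i"
  shows "E a x = 0"
proof -
  have blk: "E (s,k) ((s,i),(s,k-i)) = 0" for s k i
  proof (rule P1[where \<phi> = "\<lambda>k i. E (s,k) ((s,i),(s,k-i))" and C = "C s"])
    show "finite {i. E (s,k) ((s,i),(s,k-i)) \<noteq> 0}" for k using fin_block[OF dfD(1)[OF E]] .
    show "E (s,k) ((s,k-i),(s,k-(k-i))) = - E (s,k) ((s,i),(s,k-i))" for k i
      using anti_inst[OF dfD(2)[OF E], of "(s,k)" "(s,k-i)" "(s,i)"] by simp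
    show "E (s,0) ((s,i),(s,0-i)) = 0" for i using N unfolding normd_def by blast
    show "E (s,1) ((s,i),(s,1-i)) = C s * Yv i" for i by (rule one)
    show "of_int (m-n) * E (s,m+n) ((s,i),(s,m+n-i)) =
       of_int (2*m-i) * E (s,n) ((s,i-m),(s,n-(i-m))) + of_int (m-n+i) * E (s,n) ((s,i),(s,n-i))
     - of_int (2*n-i) * E (s,m) ((s,i-n),(s,m-(i-n))) - of_int (n-m+i) * E (s,m) ((s,i),(s,m-i))" for m n i
    proof -
      have e1: "n - (i - m) = m + n - i" "m - (i - n) = m + n - i" "m + n - i - m = n - i" "m + n - i - n = m - i" by simp_all
      have e2: "2*m - (m+n-i) = m-n+i" "2*n - (m+n-i) = n-m+i" by simp_all
      show ?thesis using dfRel[OF E, of m n s "((s,i),(s,m+n-i))"] unfolding act_app e1 e2 by simp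
    qed
  qed
  obtain s k where a: "a = (s,k)" by (cases a)
  obtain s1 m1 s2 m2 where x: "x = ((s1,m1),(s2,m2))" by (metis prod.collapse)
  show ?thesis
  proof (rule ccontr)
    assume nz: "E a x \<noteq> 0"
    have k0: "k \<noteq> 0" using nz N unfolding a normd_def by blast
    have w1: "Wt s x = k" and w2: "Wt (\<not>s) x = 0" using weights[OF E N nz[unfolded a]] by auto
    consider "s1 = s" "s2 = s" | "s1 = s" "s2 \<noteq> s" | "s1 \<noteq> s" "s2 = s" | "s1 \<noteq> s" "s2 \<noteq> s" by blast
    then show False
    proof cases
      case 1
      then have "m2 = k - m1" using w1 unfolding x Wt_def by simp
      then show False using nz blk[of s k m1] 1 unfolding a x by simp
    next
      case 2
      then have "m1 = k" "m2 = 0" "s2 = (\<not>s)" using w1 w2 unfolding x Wt_def by auto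
      then show False using nz 2 c1[of k] anti_inst[OF dfD(2)[OF E], of "(True,k)" "(True,k)" "(False,0)"] c2[of k]
        unfolding a x by (cases s) auto
    next
      case 3
      then have "m2 = k" "m1 = 0" "s1 = (\<not>s)" using w1 w2 unfolding x Wt_def by auto
      then show False using nz 3 c2[of k] anti_inst[OF dfD(2)[OF E], of "(False,k)" "(True,0)" "(False,k)"] c1[of k]
        unfolding a x by (cases s) auto
    next
      case 4
      then have "Wt s x = 0" unfolding x Wt_def by simp
      then show False using w1 k0 by simp
    qed
  qed
qed

lemma mainD:
  assumes D: "derivfam D"
  shows "\<exists>r. fsupp r \<and> antisym2 r \<and> (\<forall>a x. D a x = act a r x)"
proof -
  obtain rA where A: "fsupp rA" "antisym2 rA" "\<forall>s x. D (s,0) x = act (s,0) rA x" using stepA[OF D] by blast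
  define E1 where "E1 = (\<lambda>a x. D a x - act a rA x)"
  have E1: "derivfam E1" unfolding E1_def using derivfam_sub[OF D A(1,2)] .
  have N1: "normd E1" unfolding normd_def E1_def using A(3) by simp
  obtain rB where B: "fsupp rB" "antisym2 rB" "wz rB" "E1 (False,1) ((False,1),(True,0)) = act (False,1) rB ((False,1),(True,0))"
    using stepB[OF E1] by blast
  define E2 where "E2 = (\<lambda>a x. E1 a x - act a rB x)"
  have E2: "derivfam E2" unfolding E2_def using derivfam_sub[OF E1 B(1,2)] .
  have N2: "normd E2" unfolding E2_def using normd_sub[OF N1 B(3)] .
  have z2: "E2 (False,1) ((False,1),(True,0)) = 0" unfolding E2_def using B(4) by simp
  obtain rC C where Cc: "fsupp rC" "antisym2 rC" "wz rC" "\<forall>x. rC x \<noteq> 0 \<longrightarrow> fst (fst x) = fst (snd x)"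
      "\<forall>s i. E2 (s,1) ((s,i),(s,1-i)) - act (s,1) rC ((s,i),(s,1-i)) = C s * Yv i"
    using stepC[OF E2] by blast
  define E3 where "E3 = (\<lambda>a x. E2 a x - act a rC x)"
  have E3: "derivfam E3" unfolding E3_def using derivfam_sub[OF E2 Cc(1,2)] .
  have N3: "normd E3" unfolding E3_def using normd_sub[OF N2 Cc(3)] .
  have c1: "E3 (False,k) ((False,k),(True,0)) = 0" for k
    unfolding E3_def using crossz(2)[OF E2 z2] act_cross[OF Cc(4), of False True "(False,k)" k 0] by simp
  have c2: "E3 (True,k) ((False,0),(True,k)) = 0" for k
    unfolding E3_def using crossz(1)[OF E2 z2] act_cross[OF Cc(4), of False True "(True,k)" 0 k] by simp
  have one: "E3 (s,1) ((s,i),(s,1-i)) = C s * Yv i" for s i unfolding E3_def using Cc(5) by blast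
  have z: "E3 a x = 0" for a x by (rule ezero[OF E3 N3 c1 c2 one])
  define r where "r x = rA x + rB x + rC x" for x
  have "fsupp r" unfolding r_def[abs_def] by (intro fsupp_add A B Cc)
  moreover have "antisym2 r" unfolding r_def[abs_def] by (intro antisym_add A B Cc)
  moreover have "D a x = act a r x" for a x
  proof -
    have "act a r x = act a rA x + act a rB x + act a rC x"
      unfolding r_def[abs_def] by (simp add: act_add)
    moreover have "D a x - act a rA x - act a rB x - act a rC x = 0" using z[of a x] unfolding E3_def E2_def E1_def by simp
    ultimately show ?thesis by (simp add: algebra_simps)
  qed
  ultimately show ?thesis by blast
qed

lemma supp_bvec: "supp (bvec a) = {a}" by (auto simp: supp_def bvec_def)
lemma fsupp_bvec: "fsupp (bvec a)" by (simp add: fsupp_def supp_bvec)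

lemma br_bvec_right: "br x (bvec c) p = (\<Sum>a\<in>supp x. x a * bbr a c p)"
  unfolding br_def supp_bvec by (simp add: bvec_def)

lemma br_bvec: "br (bvec a) (bvec c) = bbr a c"
  unfolding br_def supp_bvec by (simp add: bvec_def)

lemma sum_single:
  assumes fin: "finite (supp t)" and g: "\<And>z. g z = (if z = z0 then t z * e else 0)"
  shows "sum g (supp t) = t z0 * e"
proof -
  have "sum g (supp t) = (\<Sum>z\<in>supp t. if z = z0 then t z * e else 0)" using g by simp
  also have "\<dots> = (if z0 \<in> supp t then t z0 * e else 0)" using fin by (simp add: sum.delta')
  also have "\<dots> = t z0 * e" by (auto simp: supp_def)
  finally show ?thesis .
qed

lemma sum_zero_fun: "(\<And>z. g z = 0) \<Longrightarrow> sum g S = 0" by simp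

lemma ad2_bvec:
  assumes t: "fsupp t"
  shows "ad2 (bvec a) t y = act a t y"
proof -
  obtain s k where a: "a = (s,k)" by (cases a)
  obtain s1 m1 s2 m2 where y: "y = ((s1,m1),(s2,m2))" by (metis prod.collapse)
  have fin: "finite (supp t)" using t by (simp add: fsupp_def)
  have A: "bbr (s,k) c (s1,m1) * bvec d (s2,m2) = (if s1 = s \<and> (c,d) = ((s, m1 - k),(s2,m2)) then of_int (2*k - m1) else 0)" for c d
    by (cases c) (auto simp: bvec_def)
  have B: "bvec c (s1,m1) * bbr (s,k) d (s2,m2) = (if s2 = s \<and> (c,d) = ((s1,m1),(s, m2 - k)) then of_int (2*k - m2) else 0)" for c d
    by (cases d) (auto simp: bvec_def)
  have "ad2 (bvec a) t y = (\<Sum>z\<in>supp t. t z * (bbr (s,k) (fst z) (s1,m1) * bvec (snd z) (s2,m2)))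
       + (\<Sum>z\<in>supp t. t z * (bvec (fst z) (s1,m1) * bbr (s,k) (snd z) (s2,m2)))"
    unfolding ad2_def y a br_bvec by (simp add: case_prod_beta distrib_left sum.distrib)
  also have "(\<Sum>z\<in>supp t. t z * (bbr (s,k) (fst z) (s1,m1) * bvec (snd z) (s2,m2)))
      = (if s1 = s then of_int (2*k - m1) * t ((s, m1 - k),(s2,m2)) else 0)"
  proof (cases "s1 = s")
    case True
    have "(\<Sum>z\<in>supp t. t z * (bbr (s,k) (fst z) (s1,m1) * bvec (snd z) (s2,m2))) = t ((s, m1 - k),(s2,m2)) * of_int (2*k - m1)"
      by (rule sum_single[OF fin]) (use True A in \<open>auto simp: prod_eq_iff\<close>)
    then show ?thesis using True by simp
  next
    case False
    have z: "t z * (bbr (s,k) (fst z) (s1,m1) * bvec (snd z) (s2,m2)) = 0" for z using A False by simp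
    have "(\<Sum>z\<in>supp t. t z * (bbr (s,k) (fst z) (s1,m1) * bvec (snd z) (s2,m2))) = 0"
      by (rule sum.neutral) (use z in blast)
    then show ?thesis using False by simp
  qed
  also have "(\<Sum>z\<in>supp t. t z * (bvec (fst z) (s1,m1) * bbr (s,k) (snd z) (s2,m2)))
      = (if s2 = s then of_int (2*k - m2) * t ((s1,m1),(s, m2 - k)) else 0)"
  proof (cases "s2 = s")
    case True
    have "(\<Sum>z\<in>supp t. t z * (bvec (fst z) (s1,m1) * bbr (s,k) (snd z) (s2,m2))) = t ((s1,m1),(s, m2 - k)) * of_int (2*k - m2)"
      by (rule sum_single[OF fin]) (use True B in \<open>auto simp: prod_eq_iff\<close>)
    then show ?thesis using True by simp
  next
    case False
    have z: "t z * (bvec (fst z) (s1,m1) * bbr (s,k) (snd z) (s2,m2)) = 0" for z using B False by simp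
    have "(\<Sum>z\<in>supp t. t z * (bvec (fst z) (s1,m1) * bbr (s,k) (snd z) (s2,m2))) = 0"
      by (rule sum.neutral) (use z in blast)
    then show ?thesis using False by simp
  qed
  finally show ?thesis unfolding a y act_app .
qed

lemma ad2_expand:
  assumes x: "fsupp x"
  shows "ad2 x t y = (\<Sum>a\<in>supp x. x a * ad2 (bvec a) t y)"
proof -
  obtain p q where y: "y = (p,q)" by (cases y)
  have "ad2 x t y = (\<Sum>z\<in>supp t. \<Sum>a\<in>supp x. x a * (t z * (bbr a (fst z) p * bvec (snd z) q + bvec (fst z) p * bbr a (snd z) q)))"
    unfolding ad2_def y br_bvec_right
    by (simp add: case_prod_beta sum_distrib_left sum_distrib_right sum.distrib algebra_simps)
  also have "\<dots> = (\<Sum>a\<in>supp x. \<Sum>z\<in>supp t. x a * (t z * (bbr a (fst z) p * bvec (snd z) q + bvec (fst z) p * bbr a (snd z) q)))"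
    by (rule sum.swap)
  also have "\<dots> = (\<Sum>a\<in>supp x. x a * ad2 (bvec a) t y)"
    unfolding ad2_def y br_bvec by (simp add: case_prod_beta sum_distrib_left)
  finally show ?thesis .
qed

lemma sum_bvec: "finite A \<Longrightarrow> (\<Sum>a\<in>A. x a * bvec a i) = (if i \<in> A then x i else 0)"
proof -
  assume A: "finite A"
  have "(\<Sum>a\<in>A. x a * bvec a i) = (\<Sum>a\<in>A. if i = a then x a else 0)"
    by (rule sum.cong) (auto simp: bvec_def)
  also have "\<dots> = (if i \<in> A then x i else 0)" using A by (simp add: sum.delta)
  finally show ?thesis .
qed

lemma fsupp_sumb: "finite A \<Longrightarrow> fsupp (\<lambda>i. \<Sum>a\<in>A. x a * bvec a i)"
  unfolding fsupp_def supp_def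
  by (rule finite_subset[of _ A]) (auto simp: sum_bvec split: if_splits)

lemma x_expand: "fsupp x \<Longrightarrow> x = (\<lambda>i. \<Sum>a\<in>supp x. x a * bvec a i)"
  by (rule ext) (auto simp: fsupp_def sum_bvec supp_def)

lemma delta_sum:
  assumes L: "lie_bialgebra_WW \<delta>" and A: "finite A"
  shows "\<delta> (\<lambda>i. \<Sum>a\<in>A. x a * bvec a i) = (\<lambda>k. \<Sum>a\<in>A. x a * \<delta> (bvec a) k)"
  using A
proof (induction A rule: finite_induct)
  case empty
  have "fsupp (\<lambda>i::idx. 0::complex)" by (simp add: fsupp_def supp_def)
  then have "\<delta> (\<lambda>i. 0 * (\<lambda>i::idx. 0::complex) i) = (\<lambda>k. 0 * \<delta> (\<lambda>i. 0) k)"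
    using L unfolding lie_bialgebra_WW_def by blast
  then show ?case by simp
next
  case (insert a A)
  have f1: "fsupp (\<lambda>i. x a * bvec a i)" using fsupp_bvec[of a]
    by (auto simp: fsupp_def supp_def intro: finite_subset)
  have f2: "fsupp (\<lambda>i. \<Sum>a\<in>A. x a * bvec a i)" using fsupp_sumb[OF insert(1)] .
  have "\<delta> (\<lambda>i. \<Sum>a\<in>insert a A. x a * bvec a i) = \<delta> (\<lambda>i. (x a * bvec a i) + (\<Sum>a\<in>A. x a * bvec a i))"
    using insert by simp
  also have "\<dots> = (\<lambda>k. \<delta> (\<lambda>i. x a * bvec a i) k + \<delta> (\<lambda>i. \<Sum>a\<in>A. x a * bvec a i) k)"
    using L f1 f2 unfolding lie_bialgebra_WW_def by blast
  also have "\<delta> (\<lambda>i. x a * bvec a i) = (\<lambda>k. x a * \<delta> (bvec a) k)"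
    using L fsupp_bvec[of a] unfolding lie_bialgebra_WW_def by blast
  finally show ?case using insert by simp
qed

lemma lb_derivfam:
  assumes L: "lie_bialgebra_WW \<delta>"
  shows "derivfam (\<lambda>a. \<delta> (bvec a))"
proof -
  let ?D = "\<lambda>a. \<delta> (bvec a)"
  have 1: "\<forall>a. fsupp (?D a) \<and> antisym2 (?D a)" using L fsupp_bvec unfolding lie_bialgebra_WW_def by blast
  have der: "\<delta> (br (bvec a) (bvec b)) = (\<lambda>k. ad2 (bvec a) (?D b) k - ad2 (bvec b) (?D a) k)" for a b
    using L fsupp_bvec unfolding lie_bialgebra_WW_def by blast
  have sc: "\<delta> (\<lambda>i. c * bvec a i) = (\<lambda>k. c * ?D a k)" for c a
    using L fsupp_bvec unfolding lie_bialgebra_WW_def by blast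
  have 2: "of_int (m-n) * ?D (s,m+n) x = act (s,m) (?D (s,n)) x - act (s,n) (?D (s,m)) x" for s m n x
  proof -
    have "br (bvec (s,m)) (bvec (s,n)) = (\<lambda>i. of_int (m-n) * bvec (s,m+n) i)"
      unfolding br_bvec by (auto simp: bvec_def)
    then have "(\<lambda>k. of_int (m-n) * ?D (s,m+n) k) = (\<lambda>k. ad2 (bvec (s,m)) (?D (s,n)) k - ad2 (bvec (s,n)) (?D (s,m)) k)"
      using der[of "(s,m)" "(s,n)"] sc by simp
    then show ?thesis using ad2_bvec 1 by metis
  qed
  have 3: "act (s,m) (?D (s',n)) x = act (s',n) (?D (s,m)) x" if "s \<noteq> s'" for s s' m n x
  proof -
    have "br (bvec (s,m)) (bvec (s',n)) = (\<lambda>i. 0 * bvec (s,m) i)"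
      unfolding br_bvec using that by auto
    moreover have "\<delta> (\<lambda>i. 0 * bvec (s,m) i) = (\<lambda>k. 0 * ?D (s,m) k)" by (rule sc)
    ultimately have "(\<lambda>k. 0 * ?D (s,m) k) = (\<lambda>k. ad2 (bvec (s,m)) (?D (s',n)) k - ad2 (bvec (s',n)) (?D (s,m)) k)"
      using der[of "(s,m)" "(s',n)"] by simp
    then have "ad2 (bvec (s,m)) (?D (s',n)) x - ad2 (bvec (s',n)) (?D (s,m)) x = 0" by (metis mult_zero_left)
    then show ?thesis using ad2_bvec 1 by (metis eq_iff_diff_eq_0)
  qed
  show ?thesis unfolding derivfam_def using 1 2 3 by blast
qed

theorem mainTheorem3:
  assumes "lie_bialgebra_WW \<delta>"
  shows "\<exists>r. fsupp r \<and> antisym2 r \<and> (\<forall>x. fsupp x \<longrightarrow> \<delta> x = ad2 x r)"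
proof -
  obtain r where r: "fsupp r" "antisym2 r" "\<forall>a y. \<delta> (bvec a) y = act a r y"
    using mainD[OF lb_derivfam[OF assms]] by blast
  have "\<delta> x = ad2 x r" if x: "fsupp x" for x
  proof
    fix y
    have fin: "finite (supp x)" using x by (simp add: fsupp_def)
    have "\<delta> x y = \<delta> (\<lambda>i. \<Sum>a\<in>supp x. x a * bvec a i) y" using x_expand[OF x] by metis
    also have "\<dots> = (\<Sum>a\<in>supp x. x a * \<delta> (bvec a) y)" using delta_sum[OF assms fin] by simp
    also have "\<dots> = (\<Sum>a\<in>supp x. x a * ad2 (bvec a) r y)"
    proof (rule sum.cong)
      fix a
      have "\<delta> (bvec a) y = act a r y" using r(3) by blast
      then show "x a * \<delta> (bvec a) y = x a * ad2 (bvec a) r y" using ad2_bvec[OF r(1), of a y] by simp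
    qed simp
    also have "\<dots> = ad2 x r y" using ad2_expand[OF x] by simp
    finally show "\<delta> x y = ad2 x r y" .
  qed
  then show ?thesis using r(1,2) by blast
qed

end
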